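(* Let $m\ge 1$, $S=\{1,\dots,2m+1\}$, $x_0=\{1,\dots,m\}$. For subsets $y,z\subseteq S$ put $\varrho(y,z)=(|x_0\cap y|,\,|x_0\cap z|,\,|y\cap z|,\,|x_0\cap y\cap z|)$. For $a,b\in\{m,m+1\}$ let $\mathcal{I}_{(a,b)}=\{\varrho(y,z): y\in\binom{S}{a},\ z\in\binom{S}{b}\}$. Then: (i) $\mathcal{I}_{(m,m)}$ is the set of integer four-tuples $(i,j,t,p)$ with $0\le i,j\le m$, $\max\{i+j-m,\,m-1-i-j\}\le t\le m-|i-j|$, and $\max\{0,\,i+j-m,\,i+t-m,\,j+t-m\}\le p\le \min\{i,\,j,\,t,\,i+j+t+1-m\}$. (ii) $\mathcal{I}_{(m,m+1)}$ is the set of integer four-tuples $(i,j,t,p)$ with $0\le i,j\le m$, $|i+j-m|\le t\le m-\max\{i-j,\,j-i-1\}$, and $i-\min\{i,\,m-j,\,m-t,\,i-j-t+m+1\}\le p\le i-\max\{0,\,i-j,\,i-t,\,m-j-t\}$. (iii) $\mathcal{I}_{(m+1,m)}$ is the set of integer four-tuples $(i,j,t,p)$ with $0\le i,j\le m$, $|i+j-m|\le t\le m-\max\{i-j-1,\,j-i\}$, and $j-\min\{m-i,\,j,\,m-t,\,j-i-t+m+1\}\le p\le j-\max\{0,\,j-i,\,j-t,\,m-i-t\}$. (iv) $\mathcal{I}_{(m+1,m+1)}$ is the set of integer four-tuples $(i,j,t,p)$ with $0\le i,j\le m$, $1+\max\{i+j-m-1,\,m-i-j\}\le t\le m+1-|i-j|$,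 and $i+j-m+\max\{0,\,m-i-j,\,t-i-1,\,t-j-1\}\le p\le i+j-m+\min\{m-i,\,m-j,\,t-1,\,m-i-j+t\}$. Moreover, each of the four sets $\mathcal{I}_{(m,m)},\mathcal{I}_{(m,m+1)},\mathcal{I}_{(m+1,m)},\mathcal{I}_{(m+1,m+1)}$ has cardinality $\binom{m+4}{4}$.
   Context: $\binom{S}{a}$ denotes the collection of $a$-element subsets of $S$. *)

theory Defs
  imports Main
begin

definition ksubsets :: "'a set \<Rightarrow> nat \<Rightarrow> 'a set set" where
  "ksubsets S a = {y. y \<subseteq> S \<and> card y = a}"

definition rho :: "nat set \<Rightarrow> nat set \<Rightarrow> nat set \<Rightarrow> int \<times> int \<times> int \<times> int" where
  "rho x0 y z = (int (card (x0 \<inter> y)), int (card (x0 \<inter> z)), int (card (y \<inter> z)),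
                 int (card (x0 \<inter> y \<inter> z)))"

definition Iset :: "nat \<Rightarrow> nat \<Rightarrow> nat \<Rightarrow> (int \<times> int \<times> int \<times> int) set" where
  "Iset m a b = {rho {1..m} y z | y z. y \<in> ksubsets {1..2*m+1} a \<and> z \<in> ksubsets {1..2*m+1} b}"

end

theory Submission
  imports Defs
begin


definition S1 :: "nat \<Rightarrow> nat set" where "S1 n = {..n}"
definition S2 :: "nat \<Rightarrow> (nat \<times> nat) set" where "S2 n = (SIGMA a:{..n}. S1 (n-a))"
definition S3 :: "nat \<Rightarrow> (nat \<times> nat \<times> nat) set" where "S3 n = (SIGMA a:{..n}. S2 (n-a))"
definition S4 :: "nat \<Rightarrow> (nat \<times> nat \<times> nat \<times> nat) set" where "S4 n = (SIGMA a:{..n}. S3 (n-a))"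

lemma hockey: "(\<Sum>a\<le>n. (n - a + r) choose r) = (n + r + 1) choose (r + 1)"
proof -
  have "(\<Sum>a\<le>n. (n - a + r) choose r) = (\<Sum>a\<le>n. (a + r) choose r)"
    using sum.atLeastAtMost_rev[of "\<lambda>a. (a + r) choose r" 0 n] by (simp add: atMost_atLeast0)
  also have "\<dots> = (\<Sum>a\<le>n. (r + a) choose a)"
    by (intro sum.cong refl) (metis add.commute binomial_symmetric le_add2 add_diff_cancel_left')
  also have "\<dots> = Suc (r + n) choose n" by (rule sum_choose_lower)
  also have "\<dots> = (n + r + 1) choose (r + 1)"
    using binomial_symmetric[of n "Suc (r+n)"] by (simp add: add.commute)
  finally show ?thesis .
qed

lemma fin1: "finite (S1 n)" by (simp add: S1_def)
lemma fin2: "finite (S2 n)" by (simp add: S2_def fin1)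
lemma fin3: "finite (S3 n)" by (simp add: S3_def fin2)
lemma card1: "card (S1 n) = (n + 1) choose 1" by (simp add: S1_def)
lemma card2: "card (S2 n) = (n + 2) choose 2"
proof -
  have "card (S2 n) = (\<Sum>a\<le>n. card (S1 (n - a)))" by (simp add: S2_def fin1)
  also have "\<dots> = (\<Sum>a\<le>n. (n - a + 1) choose 1)" by (simp only: card1)
  also have "\<dots> = (n + 1 + 1) choose (1 + 1)" by (rule hockey)
  finally show ?thesis by (simp add: numeral_eq_Suc)
qed
lemma card3: "card (S3 n) = (n + 3) choose 3"
proof -
  have "card (S3 n) = (\<Sum>a\<le>n. card (S2 (n - a)))" by (simp add: S3_def fin2)
  also have "\<dots> = (\<Sum>a\<le>n. (n - a + 2) choose 2)" by (simp only: card2)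
  also have "\<dots> = (n + 2 + 1) choose (2 + 1)" by (rule hockey)
  finally show ?thesis by (simp add: numeral_eq_Suc)
qed
lemma card4: "card (S4 n) = (n + 4) choose 4"
proof -
  have "card (S4 n) = (\<Sum>a\<le>n. card (S3 (n - a)))" by (simp add: S4_def fin3)
  also have "\<dots> = (\<Sum>a\<le>n. (n - a + 3) choose 3)" by (simp only: card3)
  also have "\<dots> = (n + 3 + 1) choose (3 + 1)" by (rule hockey)
  finally show ?thesis by (simp add: numeral_eq_Suc)
qed

lemma S4_eq: "S4 n = {(a,b,c,d). a+b+c+d \<le> n}"
  by (auto simp: S4_def S3_def S2_def S1_def)

definition SI :: "nat \<Rightarrow> (int \<times> int \<times> int \<times> int) set" where
  "SI n = {(a,b,c,d). 0 \<le> a \<and> 0 \<le> b \<and> 0 \<le> c \<and> 0 \<le> d \<and> a+b+c+d \<le> int n}"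

lemma cardSI: "card (SI n) = (n + 4) choose 4"
proof -
  have "SI n = (\<lambda>(a,b,c,d). (int a, int b, int c, int d)) ` S4 n"
  proof (rule set_eqI, rule iffI)
    fix x assume "x \<in> SI n"
    then obtain a b c d where x: "x = (a,b,c,d)" "0 \<le> a" "0 \<le> b" "0 \<le> c" "0 \<le> d" "a+b+c+d \<le> int n"
      by (auto simp: SI_def)
    then have "(nat a, nat b, nat c, nat d) \<in> S4 n" by (simp add: S4_eq) 
    moreover have "x = (\<lambda>(a,b,c,d). (int a, int b, int c, int d)) (nat a, nat b, nat c, nat d)"
      using x by simp
    ultimately show "x \<in> (\<lambda>(a,b,c,d). (int a, int b, int c, int d)) ` S4 n" by blast
  qed (auto simp: SI_def S4_eq)
  moreover have "inj_on (\<lambda>(a,b,c,d). (int a, int b, int c, int d)) (S4 n)"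
    by (auto simp: inj_on_def)
  ultimately show ?thesis by (simp add: card_image card4)
qed



definition G :: "nat \<Rightarrow> nat \<Rightarrow> nat \<Rightarrow> (int \<times> int \<times> int \<times> int) set" where
  "G m a b = {(i,j,t,p). 0 \<le> p \<and> p \<le> i \<and> p \<le> j \<and> i + j - p \<le> int m \<and> p \<le> t
     \<and> t - p \<le> int a - i \<and> t - p \<le> int b - j \<and> (int a - i) + (int b - j) - (t - p) \<le> int m + 1}"

definition phi :: "nat \<Rightarrow> int \<times> int \<times> int \<times> int \<Rightarrow> int \<times> int \<times> int \<times> int" where
  "phi m x = (case x of (i,j,t,p) \<Rightarrow>
     (if t - p \<ge> int m - i - j + p
      then (p, i - p - (t - int m + i + j - 2*p), j - p - (t - int m + i + j - 2*p), 2*(t - int m + i + j - 2*p))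
      else (p + 1 - (int m - i - j - t + 2*p), i - p, j - p, 2*(int m - i - j - t + 2*p) - 1)))"

definition psi :: "nat \<Rightarrow> int \<times> int \<times> int \<times> int \<Rightarrow> int \<times> int \<times> int \<times> int" where
  "psi m x = (case x of (a,b,c,d) \<Rightarrow>
     (if even d then (a + b + d div 2, a + c + d div 2, a + (int m - a - b - c - d) + d div 2, a)
      else (a + (d+1) div 2 - 1 + b, a + (d+1) div 2 - 1 + c, a + (d+1) div 2 - 1 + (int m - a - b - c - d), a + (d+1) div 2 - 1)))"

lemma bij_G: "bij_betw (phi m) (G m m m) (SI m)"
proof (rule bij_betw_byWitness[where f'="psi m"])
  show "\<forall>x\<in>G m m m. psi m (phi m x) = x"
  proof
    fix x assume "x \<in> G m m m"
    then obtain i j t p where x: "x = (i,j,t,p)" and h: "0 \<le> p" "p \<le> i" "p \<le> j" "i + j - p \<le> int m" "p \<le> t"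
      "t - p \<le> int m - i" "t - p \<le> int m - j" "(int m - i) + (int m - j) - (t - p) \<le> int m + 1"
      by (auto simp: G_def)
    show "psi m (phi m x) = x"
    proof (cases "t - p \<ge> int m - i - j + p")
      case True
      then show ?thesis using h unfolding x phi_def psi_def by simp
    next
      case False
      have "odd (2*(int m - i - j - t + 2*p) - 1)" by simp
      moreover have "(2*(int m - i - j - t + 2*p) - 1 + 1) div 2 = int m - i - j - t + 2*p" by simp
      ultimately show ?thesis using h False unfolding x phi_def psi_def by (simp add: Let_def)
    qed
  qed
  show "\<forall>x\<in>SI m. phi m (psi m x) = x"
  proof
    fix x assume "x \<in> SI m"
    then obtain a b c d where x: "x = (a,b,c,d)" and h: "0 \<le> a" "0 \<le> b" "0 \<le> c" "0 \<le> d" "a+b+c+d \<le> int m"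
      by (auto simp: SI_def)
    show "phi m (psi m x) = x"
    proof (cases "even d")
      case True
      then obtain k where k: "d = 2*k" by blast
      show ?thesis using h unfolding x phi_def psi_def k by simp
    next
      case False
      then obtain k where k: "d = 2*k+1" using oddE by blast
      have "(2*k+1+1) div 2 = k + 1" by simp
      then show ?thesis using h unfolding x phi_def psi_def k by simp
    qed
  qed
  show "phi m ` G m m m \<subseteq> SI m"
    by (auto simp: G_def phi_def SI_def split: if_splits)
  show "psi m ` SI m \<subseteq> G m m m"
  proof
    fix y assume "y \<in> psi m ` SI m"
    then obtain x where y: "y = psi m x" and "x \<in> SI m" by blast
    then obtain a b c d where x: "x = (a,b,c,d)" and h: "0 \<le> a" "0 \<le> b" "0 \<le> c" "0 \<le> d" "a+b+c+d \<le> int m"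
      by (auto simp: SI_def)
    show "y \<in> G m m m"
    proof (cases "even d")
      case True
      then obtain k where k: "d = 2*k" by blast
      show ?thesis using h unfolding y x psi_def k G_def by simp
    next
      case False
      then obtain k where k: "d = 2*k+1" using oddE by blast
      have "(2*k+1+1) div 2 = k + 1" by simp
      then show ?thesis using h unfolding y x psi_def k G_def by simp
    qed
  qed
qed

lemma cardG: "card (G m m m) = (m + 4) choose 4"
  using bij_betw_same_card[OF bij_G] cardSI by simp



lemma construct:
  fixes P I J Q A B m :: nat
  assumes "P \<le> I" "P \<le> J" "I + J \<le> m + P" "Q \<le> A" "Q \<le> B" "A + B \<le> m + 1 + Q"
  shows "\<exists>y z. y \<subseteq> {1..2*m+1} \<and> z \<subseteq> {1..2*m+1} \<and> card y = I + A \<and> card z = J + B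
     \<and> card ({1..m} \<inter> y) = I \<and> card ({1..m} \<inter> z) = J \<and> card (y \<inter> z) = P + Q
     \<and> card ({1..m} \<inter> y \<inter> z) = P"
proof -
  define y where "y = {1..I} \<union> {m+1..m+A}"
  define z where "z = {1..P} \<union> {I+1..I+J-P} \<union> {m+A-Q+1..m+A-Q+B}"
  have y1: "y \<subseteq> {1..2*m+1}" using assms by (auto simp: y_def)
  have z1: "z \<subseteq> {1..2*m+1}" using assms by (auto simp: z_def)
  have cy: "card y = I + A" unfolding y_def
    by (subst card_Un_disjoint) (use assms in auto)
  have cz: "card z = J + B" unfolding z_def
    apply (subst card_Un_disjoint, simp, simp, use assms in auto)
    apply (subst card_Un_disjoint, simp, simp, use assms in auto)
    done
  have e1: "{1..m} \<inter> y = {1..I}" using assms by (auto simp: y_def)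
  have e2: "{1..m} \<inter> z = {1..P} \<union> {I+1..I+J-P}" using assms by (auto simp: z_def)
  have e3: "y \<inter> z = {1..P} \<union> {m+A-Q+1..m+A}" using assms by (auto simp: y_def z_def)
  have e4: "{1..m} \<inter> y \<inter> z = {1..P}" using assms by (auto simp: y_def z_def)
  have c1: "card ({1..m} \<inter> y) = I" unfolding e1 by simp
  have c4: "card ({1..m} \<inter> y \<inter> z) = P" unfolding e4 by simp
  have c2: "card ({1..m} \<inter> z) = J" unfolding e2
    by (subst card_Un_disjoint) (use assms in auto)
  have c3: "card (y \<inter> z) = P + Q" unfolding e3
    by (subst card_Un_disjoint) (use assms in auto)
  show ?thesis
    apply (rule exI[where x=y], rule exI[where x=z])
    using y1 z1 cy cz c1 c2 c3 c4 by simp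
qed

lemma Iset_sub: "Iset m a b \<subseteq> G m a b"
proof
  fix x assume "x \<in> Iset m a b"
  then obtain y z where x: "x = rho {1..m} y z" and y: "y \<subseteq> {1..2*m+1}" "card y = a"
     and z: "z \<subseteq> {1..2*m+1}" "card z = b"
    by (auto simp: Iset_def ksubsets_def)
  define X where "X = {1..m}"
  define C where "C = {m+1..2*m+1}"
  have XC: "X \<inter> C = {}" "X \<union> C = {1..2*m+1}" by (auto simp: X_def C_def)
  have cX: "card X = m" and cC: "card C = m + 1" by (auto simp: X_def C_def)
  have fX: "finite X" and fC: "finite C" by (auto simp: X_def C_def)
  have split: "card w = card (X \<inter> w) + card (C \<inter> w)" if "w \<subseteq> {1..2*m+1}" for w
  proof -
    have "w = (X \<inter> w) \<union> (C \<inter> w)" using that XC by blast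
    then have "card w = card ((X \<inter> w) \<union> (C \<inter> w))" by simp
    also have "\<dots> = card (X \<inter> w) + card (C \<inter> w)"
      by (rule card_Un_disjoint) (use fX fC XC in auto)
    finally show ?thesis .
  qed
  have ub: "card (U \<inter> v) + card (U \<inter> w) \<le> card U + card (U \<inter> v \<inter> w)" if "finite U" for U v w
  proof -
    have "card (U \<inter> v) + card (U \<inter> w) = card ((U \<inter> v) \<union> (U \<inter> w)) + card ((U \<inter> v) \<inter> (U \<inter> w))"
      by (rule card_Un_Int) (use that in auto)
    moreover have "card ((U \<inter> v) \<union> (U \<inter> w)) \<le> card U" by (rule card_mono) (use that in auto)
    moreover have "(U \<inter> v) \<inter> (U \<inter> w) = U \<inter> v \<inter> w" by blast
    ultimately show ?thesis by simp
  qed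
  have mono1: "card (U \<inter> v \<inter> w) \<le> card (U \<inter> v)" "card (U \<inter> v \<inter> w) \<le> card (U \<inter> w)" if "finite U" for U v w
    by (rule card_mono; use that in auto)+
  have yz: "y \<inter> z \<subseteq> {1..2*m+1}" using y by blast
  have s1: "card y = card (X \<inter> y) + card (C \<inter> y)" using split y by blast
  have s2: "card z = card (X \<inter> z) + card (C \<inter> z)" using split z by blast
  have s3: "card (y \<inter> z) = card (X \<inter> y \<inter> z) + card (C \<inter> y \<inter> z)" using split[OF yz] by (simp add: Int_assoc)
  have u1: "card (X \<inter> y) + card (X \<inter> z) \<le> m + card (X \<inter> y \<inter> z)" using ub[OF fX] cX by simp
  have u2: "card (C \<inter> y) + card (C \<inter> z) \<le> m + 1 + card (C \<inter> y \<inter> z)" using ub[OF fC] cC by simp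
  note m1 = mono1[OF fX, of y z] mono1[OF fC, of y z]
  show "x \<in> G m a b"
    unfolding x rho_def G_def X_def[symmetric] using s1 s2 s3 u1 u2 m1 y z by auto
qed

lemma G_sub: "G m a b \<subseteq> Iset m a b"
proof
  fix x assume "x \<in> G m a b"
  then obtain i j t p where x: "x = (i,j,t,p)" and h: "0 \<le> p" "p \<le> i" "p \<le> j" "i + j - p \<le> int m" "p \<le> t"
     "t - p \<le> int a - i" "t - p \<le> int b - j" "(int a - i) + (int b - j) - (t - p) \<le> int m + 1"
    by (auto simp: G_def)
  have p1: "nat p \<le> nat i" "nat p \<le> nat j" "nat (t - p) \<le> nat (int a - i)" "nat (t - p) \<le> nat (int b - j)"
      using h by arith+
  have p2: "nat i + nat j \<le> m + nat p" "nat (int a - i) + nat (int b - j) \<le> m + 1 + nat (t - p)"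
      using h by arith+
  obtain yy zz where yz: "yy \<subseteq> {1..2*m+1} \<and> zz \<subseteq> {1..2*m+1} \<and> card yy = nat i + nat (int a - i)
     \<and> card zz = nat j + nat (int b - j)
     \<and> card ({1..m} \<inter> yy) = nat i \<and> card ({1..m} \<inter> zz) = nat j \<and> card (yy \<inter> zz) = nat p + nat (t - p)
     \<and> card ({1..m} \<inter> yy \<inter> zz) = nat p"
    using construct[OF p1(1,2) p2(1) p1(3,4) p2(2)] by blast
  have "x = rho {1..m} yy zz" using yz h unfolding x rho_def by auto
  moreover have "yy \<in> ksubsets {1..2*m+1} a" "zz \<in> ksubsets {1..2*m+1} b"
    using yz h by (auto simp: ksubsets_def)
  ultimately show "x \<in> Iset m a b" by (auto simp: Iset_def)
qed

lemma Iset_G: "Iset m a b = G m a b" using Iset_sub G_sub by blast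



lemma E1: "G m m m = {(i, j, t, p). 0 \<le> i \<and> i \<le> int m \<and> 0 \<le> j \<and> j \<le> int m
            \<and> max (i + j - int m) (int m - 1 - i - j) \<le> t \<and> t \<le> int m - \<bar>i - j\<bar>
            \<and> max (max 0 (i + j - int m)) (max (i + t - int m) (j + t - int m)) \<le> p
            \<and> p \<le> min (min i j) (min t (i + j + t + 1 - int m))}"
  unfolding G_def by (rule set_eqI) (clarsimp simp: max_def min_def abs_if; arith)



lemma card_inv:
  assumes "\<And>x. x \<in> A \<Longrightarrow> g x \<in> B" "\<And>x. x \<in> B \<Longrightarrow> h x \<in> A" "\<And>x. x \<in> B \<Longrightarrow> g (h x) = x"
    "\<And>x. x \<in> A \<Longrightarrow> h (g x) = x"
  shows "card B = card A"
proof -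
  have "bij_betw g A B" by (rule bij_betw_byWitness[where f'=h]) (use assms in auto)
  then show ?thesis by (simp add: bij_betw_same_card)
qed

lemma C2: "card (G m m (m+1)) = card (G m m m)"
  by (rule card_inv[where g="\<lambda>(i,j,t,p). (i, int m - j, int m - t, i - p)"
                      and h="\<lambda>(i,j,t,p). (i, int m - j, int m - t, i - p)"])
     (auto simp: G_def)

lemma C3: "card (G m (m+1) m) = card (G m m (m+1))"
  by (rule card_inv[where g="\<lambda>(i,j,t,p). (j,i,t,p)" and h="\<lambda>(i,j,t,p). (j,i,t,p)"])
     (auto simp: G_def)

lemma C4: "card (G m (m+1) (m+1)) = card (G m m m)"
  by (rule card_inv[where g="\<lambda>(i,j,t,p). (int m - i, int m - j, t + 1, int m - i - j + p)"
                      and h="\<lambda>(i,j,t,p). (int m - i, int m - j, t - 1, p - i - j + int m)"])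
     (auto simp: G_def)

lemma E2: "G m m (m+1) = {(i, j, t, p). 0 \<le> i \<and> i \<le> int m \<and> 0 \<le> j \<and> j \<le> int m
            \<and> \<bar>i + j - int m\<bar> \<le> t \<and> t \<le> int m - max (i - j) (j - i - 1)
            \<and> i - min (min i (int m - j)) (min (int m - t) (i - j - t + int m + 1)) \<le> p
            \<and> p \<le> i - max (max 0 (i - j)) (max (i - t) (int m - j - t))}"
  unfolding G_def by (rule set_eqI) (clarsimp simp: max_def min_def abs_if; arith)

lemma E3: "G m (m+1) m = {(i, j, t, p). 0 \<le> i \<and> i \<le> int m \<and> 0 \<le> j \<and> j \<le> int m
            \<and> \<bar>i + j - int m\<bar> \<le> t \<and> t \<le> int m - max (i - j - 1) (j - i)
            \<and> j - min (min (int m - i) j) (min (int m - t) (j - i - t + int m + 1)) \<le> p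
            \<and> p \<le> j - max (max 0 (j - i)) (max (j - t) (int m - i - t))}"
  unfolding G_def by (rule set_eqI) (clarsimp simp: max_def min_def abs_if; arith)

lemma E4: "G m (m+1) (m+1) = {(i, j, t, p). 0 \<le> i \<and> i \<le> int m \<and> 0 \<le> j \<and> j \<le> int m
            \<and> 1 + max (i + j - int m - 1) (int m - i - j) \<le> t \<and> t \<le> int m + 1 - \<bar>i - j\<bar>
            \<and> i + j - int m + max (max 0 (int m - i - j)) (max (t - i - 1) (t - j - 1)) \<le> p
            \<and> p \<le> i + j - int m + min (min (int m - i) (int m - j)) (min (t - 1) (int m - i - j + t))}"
  unfolding G_def by (rule set_eqI) (clarsimp simp: max_def min_def abs_if; arith)

theorem proposition3p1:
  fixes m :: nat
  assumes "m \<ge> 1"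
  shows "(Iset m m m = {(i, j, t, p). 0 \<le> i \<and> i \<le> int m \<and> 0 \<le> j \<and> j \<le> int m
            \<and> max (i + j - int m) (int m - 1 - i - j) \<le> t \<and> t \<le> int m - \<bar>i - j\<bar>
            \<and> max (max 0 (i + j - int m)) (max (i + t - int m) (j + t - int m)) \<le> p
            \<and> p \<le> min (min i j) (min t (i + j + t + 1 - int m))})
    \<and> (Iset m m (m+1) = {(i, j, t, p). 0 \<le> i \<and> i \<le> int m \<and> 0 \<le> j \<and> j \<le> int m
            \<and> \<bar>i + j - int m\<bar> \<le> t \<and> t \<le> int m - max (i - j) (j - i - 1)
            \<and> i - min (min i (int m - j)) (min (int m - t) (i - j - t + int m + 1)) \<le> p
            \<and> p \<le> i - max (max 0 (i - j)) (max (i - t) (int m - j - t))})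
    \<and> (Iset m (m+1) m = {(i, j, t, p). 0 \<le> i \<and> i \<le> int m \<and> 0 \<le> j \<and> j \<le> int m
            \<and> \<bar>i + j - int m\<bar> \<le> t \<and> t \<le> int m - max (i - j - 1) (j - i)
            \<and> j - min (min (int m - i) j) (min (int m - t) (j - i - t + int m + 1)) \<le> p
            \<and> p \<le> j - max (max 0 (j - i)) (max (j - t) (int m - i - t))})
    \<and> (Iset m (m+1) (m+1) = {(i, j, t, p). 0 \<le> i \<and> i \<le> int m \<and> 0 \<le> j \<and> j \<le> int m
            \<and> 1 + max (i + j - int m - 1) (int m - i - j) \<le> t \<and> t \<le> int m + 1 - \<bar>i - j\<bar>
            \<and> i + j - int m + max (max 0 (int m - i - j)) (max (t - i - 1) (t - j - 1)) \<le> p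
            \<and> p \<le> i + j - int m + min (min (int m - i) (int m - j)) (min (t - 1) (int m - i - j + t))})
    \<and> (card (Iset m m m) = (m + 4) choose 4)
    \<and> (card (Iset m m (m+1)) = (m + 4) choose 4)
    \<and> (card (Iset m (m+1) m) = (m + 4) choose 4)
    \<and> (card (Iset m (m+1) (m+1)) = (m + 4) choose 4)"
    using E1 E2 E3 E4 C2 C3 C4 cardG Iset_G by simp

end
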